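(* Let $q$ be a prime power, $h\geq 2$, and let $\mathcal{L}$ be a blocking set of $\mathrm{PG}(2,q^h)$ projectively equivalent to $\{(x:\mathrm{Tr}_{q^h/q}(x):y): x\in\mathbb{F}_{q^h},\ y\in\mathbb{F}_q,\ (x,y)\neq(0,0)\}$. Let $P$ be a point not in $\mathcal{L}$. Then $P$ is incident with at least $q^h-q^{h-2}+1$ tangent lines to $\mathcal{L}$.
   Context: $\mathrm{Tr}_{q^h/q}(x)=x+x^q+\dots+x^{q^{h-1}}$. Points of $\mathrm{PG}(2,q^h)$ are written in homogeneous coordinates. A tangent line to $\mathcal{L}$ is a line meeting $\mathcal{L}$ in exactly one point. *)

theory Defs
  imports "HOL-Analysis.Analysis" "HOL-Computational_Algebra.Primes"
begin

text \<open>Homogeneous coordinates: vectors in F^3 (index type 3, coordinates 1,2,3).\<close>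

definition mk3 :: "'a::zero \<Rightarrow> 'a \<Rightarrow> 'a \<Rightarrow> 'a^3" where
  "mk3 a b c = (\<chi> i. if i = 1 then a else if i = 2 then b else c)"

definition proj_pt :: "'a::field^3 \<Rightarrow> ('a^3) set" where
  "proj_pt v = {c *s v | c. c \<noteq> 0}"

definition PG2 :: "('a::field^3) set set" where
  "PG2 = {proj_pt v | v. v \<noteq> 0}"

definition dot3 :: "'a::field^3 \<Rightarrow> 'a^3 \<Rightarrow> 'a" where
  "dot3 l v = (\<Sum>i\<in>UNIV. l $ i * v $ i)"

definition proj_line :: "'a::field^3 \<Rightarrow> ('a^3) set set" where
  "proj_line l = {P \<in> PG2. \<exists>v\<in>P. dot3 l v = 0}"

definition lines2 :: "('a::field^3) set set set" where
  "lines2 = {proj_line l | l. l \<noteq> 0}"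

definition blocking_set :: "('a::field^3) set set \<Rightarrow> bool" where
  "blocking_set B \<longleftrightarrow> B \<subseteq> PG2 \<and> (\<forall>lne\<in>lines2. lne \<inter> B \<noteq> {})"

definition tangent_line :: "('a::field^3) set set \<Rightarrow> ('a^3) set set \<Rightarrow> bool" where
  "tangent_line B lne \<longleftrightarrow> lne \<in> lines2 \<and> card (lne \<inter> B) = 1"

definition proj_image :: "'a::field^3^3 \<Rightarrow> ('a^3) set set \<Rightarrow> ('a^3) set set" where
  "proj_image M B = (\<lambda>P. (\<lambda>v. M *v v) ` P) ` B"

definition proj_equiv :: "('a::field^3) set set \<Rightarrow> ('a^3) set set \<Rightarrow> bool" where
  "proj_equiv A B \<longleftrightarrow> (\<exists>M. invertible M \<and> B = proj_image M A)"

definition trace_rel :: "nat \<Rightarrow> nat \<Rightarrow> 'a::field \<Rightarrow> 'a" where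
  "trace_rel q h x = (\<Sum>i<h. x ^ (q ^ i))"

text \<open>The set {(x : Tr(x) : y) | x in F_{q^h}, y in F_q, (x,y) != (0,0)};
  F_q is the subfield {y. y^q = y}.\<close>
definition trace_set :: "nat \<Rightarrow> nat \<Rightarrow> ('a::field^3) set set" where
  "trace_set q h = {proj_pt (mk3 x (trace_rel q h x) y) | x y. y ^ q = y \<and> (x, y) \<noteq> (0, 0)}"

definition prime_power :: "nat \<Rightarrow> bool" where
  "prime_power q \<longleftrightarrow> (\<exists>p k. prime p \<and> k > 0 \<and> q = p ^ k)"

end

theory Submission
  imports Defs "HOL-Computational_Algebra.Polynomial" "HOL-Library.Cardinality"
begin

lemma ff_pow_card:
  fixes x :: "'a::{field,finite}"
  shows "x ^ CARD('a) = x"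
proof (cases "x = 0")
  case False
  have "x * (\<Prod>y\<in>UNIV-{0}. x * y) = x * x ^ (card (UNIV :: 'a set) - 1) * \<Prod>(UNIV-{0})"
    by (simp add: prod.distrib mult_ac)
  also have "x * x ^ (card (UNIV :: 'a set) - 1) = x ^ Suc (card (UNIV :: 'a set) - 1)"
    by (subst power_Suc) auto
  also have "Suc (card (UNIV :: 'a set) - 1) = card (UNIV :: 'a set)"
    using finite_UNIV_card_ge_0[where ?'a = 'a] by simp
  also have "(\<Prod>y\<in>UNIV-{0}. x * y) = (\<Prod>y\<in>UNIV-{0}. y)"
    by (rule prod.reindex_bij_witness[of _ "\<lambda>y. y / x" "\<lambda>y. x * y"]) (use False in auto)
  finally show ?thesis
    by simp
qed (use finite_UNIV_card_ge_0[where ?'a = 'a] in auto)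

lemma ff_of_nat_card:
  "of_nat CARD('a::{field,finite}) = (0::'a)"
proof -
  have "(\<Sum>y\<in>(UNIV::'a set). y + 1) = (\<Sum>y\<in>UNIV. y)"
    by (rule sum.reindex_bij_witness[of _ "\<lambda>y. y - 1" "\<lambda>y. y + 1"]) auto
  then have "(\<Sum>y\<in>(UNIV::'a set). y) + of_nat CARD('a) = (\<Sum>y\<in>UNIV. y)"
    by (simp add: sum.distrib)
  then show ?thesis by simp
qed

lemma ff_frob:
  assumes "prime_power q" "CARD('a::{field,finite}) = q ^ h" "h > 0"
  shows "\<forall>x y::'a. (x + y) ^ q = x ^ q + y ^ q"
proof -
  obtain p k where pk: "prime p" "k > 0" "q = p ^ k"
    using assms(1) unfolding prime_power_def by blast
  have pos: "CHAR('a) > 0" by (rule finite_imp_CHAR_pos) simp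
  have pr: "prime CHAR('a)" using prime_CHAR_semidom[OF pos] .
  have "CHAR('a) dvd CARD('a)"
    using ff_of_nat_card[where 'a='a] of_nat_eq_0_iff_char_dvd by blast
  then have "CHAR('a) dvd p ^ (k * h)" using assms(2) pk by (simp add: power_mult)
  then have "CHAR('a) dvd p" using pr prime_dvd_power by blast
  then have cp: "CHAR('a) = p" using pr pk(1) primes_dvd_imp_eq by blast
  show ?thesis
    using freshmans_dream'[OF pr, of q k] cp pk by auto
qed


lemma frob_pow:
  fixes x y :: "'a::field"
  assumes "\<forall>x y::'a. (x + y) ^ q = x ^ q + y ^ q"
  shows "(x + y) ^ (q ^ i) = x ^ (q ^ i) + y ^ (q ^ i)"
proof (induction i)
  case (Suc i)
  have "(x + y) ^ (q ^ Suc i) = ((x + y) ^ (q ^ i)) ^ q"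
    by (simp only: power_Suc2 power_mult)
  also have "\<dots> = (x ^ (q ^ i)) ^ q + (y ^ (q ^ i)) ^ q" using Suc assms by simp
  also have "\<dots> = x ^ (q ^ Suc i) + y ^ (q ^ Suc i)"
    by (simp only: power_Suc2 power_mult)
  finally show ?case .
qed simp

lemma frob_sum:
  fixes f :: "'b \<Rightarrow> 'a::field"
  assumes "\<forall>x y::'a. (x + y) ^ q = x ^ q + y ^ q" "q > 0"
  shows "(sum f A) ^ q = sum (\<lambda>i. f i ^ q) A"
  using assms
  by (induction A rule: infinite_finite_induct) (auto simp: power_0_left)

lemma fq_pow:
  fixes c :: "'a::field"
  assumes "c ^ q = c"
  shows "c ^ (q ^ i) = c"
proof (induction i)
  case (Suc i)
  have "c ^ (q ^ Suc i) = (c ^ (q ^ i)) ^ q" by (simp only: power_Suc2 power_mult)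
  then show ?case using Suc assms by simp
qed simp

lemma trace_add:
  fixes x y :: "'a::field"
  assumes "\<forall>x y::'a. (x + y) ^ q = x ^ q + y ^ q"
  shows "trace_rel q h (x + y) = trace_rel q h x + trace_rel q h y"
  unfolding trace_rel_def using frob_pow[OF assms] by (simp add: sum.distrib)

lemma trace_scal:
  fixes x c :: "'a::field"
  assumes "c ^ q = c"
  shows "trace_rel q h (c * x) = c * trace_rel q h x"
  unfolding trace_rel_def using fq_pow[OF assms]
  by (simp add: power_mult_distrib sum_distrib_left)

lemma trace_zero:
  assumes "q > 0"
  shows "trace_rel q h (0::'a::field) = 0"
  unfolding trace_rel_def using assms by (simp add: power_0_left)

lemma trace_fq:
  fixes x :: "'a::field"
  assumes "\<forall>x y::'a. (x + y) ^ q = x ^ q + y ^ q" "q > 0" "x ^ (q ^ h) = x"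
  shows "(trace_rel q h x) ^ q = trace_rel q h x"
proof -
  have "(trace_rel q h x) ^ q = (\<Sum>i<h. (x ^ (q ^ i)) ^ q)"
    unfolding trace_rel_def by (rule frob_sum[OF assms(1,2)])
  also have "\<dots> = (\<Sum>i<h. x ^ (q ^ Suc i))"
    by (simp only: power_Suc2 power_mult)
  also have "\<dots> = trace_rel q h x"
  proof -
    have "(\<Sum>i<Suc h. x ^ (q ^ i)) = x ^ (q ^ 0) + (\<Sum>i<h. x ^ (q ^ Suc i))"
      by (rule sum.lessThan_Suc_shift)
    moreover have "(\<Sum>i<Suc h. x ^ (q ^ i)) = (\<Sum>i<h. x ^ (q ^ i)) + x ^ (q ^ h)"
      by simp
    ultimately show ?thesis using assms(3) unfolding trace_rel_def by simp
  qed
  finally show ?thesis .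
qed


lemma dvd_pow_minus_one:
  fixes y :: "'a::comm_ring_1"
  shows "(y - 1) dvd (y ^ m - 1)"
proof (induction m)
  case (Suc m)
  have e: "y ^ Suc m - 1 = y * (y ^ m - 1) + (y - 1)" by (simp add: algebra_simps)
  show ?case by (subst e) (intro dvd_add dvd_mult Suc.IH dvd_refl)
qed simp

lemma nat_dvd_pow_minus_one:
  assumes "(q::nat) \<ge> 1"
  shows "(q - 1) dvd (q ^ h - 1)"
proof -
  have "(int q - 1) dvd (int q ^ h - 1)" by (rule dvd_pow_minus_one)
  moreover have "int (q - 1) = int q - 1" using assms by simp
  moreover have "int (q ^ h - 1) = int q ^ h - 1" using assms by (simp add: of_nat_diff)
  ultimately have "int (q - 1) dvd int (q ^ h - 1)" by simp
  then show ?thesis using int_dvd_int_iff by blast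
qed

lemma fq_card:
  assumes "q \<ge> 2" "h \<ge> 1" "CARD('a::{field,finite}) = q ^ h"
  shows "card {a::'a. a ^ q = a} \<ge> q"
proof -
  define X :: "'a poly" where "X = monom 1 1"
  define N where "N = q ^ h"
  have Nq: "N \<ge> q" unfolding N_def using assms power_increasing[of 1 h q] by simp
  have Xp: "X ^ n = monom 1 n" for n unfolding X_def by (simp add: monom_power)
  obtain m where m: "q ^ h - 1 = (q - 1) * m"
    using nat_dvd_pow_minus_one[of q h] assms by (auto elim: dvdE)
  have "(X ^ (q - 1) - 1) dvd ((X ^ (q - 1)) ^ m - 1)" by (rule dvd_pow_minus_one)
  then have d: "X * (X ^ (q - 1) - 1) dvd X * ((X ^ (q - 1)) ^ m - 1)" by (rule mult_dvd_mono[OF dvd_refl])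
  have e1: "X * (X ^ (q - 1) - 1) = X ^ q - X"
    using assms by (simp add: algebra_simps power_Suc[symmetric])
  have e2: "X * ((X ^ (q - 1)) ^ m - 1) = X ^ N - X"
  proof -
    have "(X ^ (q - 1)) ^ m = X ^ (N - 1)" unfolding N_def using m by (simp add: power_mult)
    moreover have "Suc (N - 1) = N" using Nq assms by simp
    ultimately show ?thesis by (simp add: algebra_simps power_Suc[symmetric])
  qed
  have "(X ^ q - X) dvd (X ^ N - X)" using d unfolding e1 e2 .
  then obtain g where g: "X ^ N - X = (X ^ q - X) * g" by (auto elim: dvdE)
  have degN: "degree (X ^ N - X) = N" and nzN: "X ^ N - X \<noteq> 0" if "N \<ge> 2" for N
  proof -
    have c: "coeff (X ^ N - X) N = 1" using that unfolding Xp
      by (simp add: X_def coeff_monom)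
    have "degree (X ^ N - X) \<le> N" unfolding Xp
      using that by (intro degree_diff_le) (auto simp: X_def degree_monom_eq)
    moreover have "N \<le> degree (X ^ N - X)" using c by (intro le_degree) simp
    ultimately show "degree (X ^ N - X) = N" by simp
    show "X ^ N - X \<noteq> 0" using c by auto
  qed
  have "g \<noteq> 0" using g nzN[of N] Nq assms by auto
  then have "degree (X ^ N - X) = degree (X ^ q - X) + degree g"
    using g nzN[of q] assms by (simp add: degree_mult_eq)
  then have dg: "degree g = N - q" using degN[of N] degN[of q] Nq assms by simp
  have pX: "poly (X ^ n - X) a = a ^ n - a" for n a unfolding Xp X_def by (simp add: poly_monom)
  have "UNIV \<subseteq> {a::'a. poly (X ^ q - X) a = 0} \<union> {a. poly g a = 0}"
  proof
    fix a :: 'a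
    have "poly (X ^ N - X) a = 0" unfolding pX N_def using ff_pow_card[of a] assms by simp
    then show "a \<in> {a::'a. poly (X ^ q - X) a = 0} \<union> {a. poly g a = 0}" using g by simp
  qed
  then have "CARD('a) \<le> card ({a::'a. poly (X ^ q - X) a = 0} \<union> {a. poly g a = 0})"
    by (intro card_mono) auto
  also have "\<dots> \<le> card {a::'a. poly (X ^ q - X) a = 0} + card {a. poly g a = 0}"
    by (rule card_Un_le)
  also have "card {a. poly g a = 0} \<le> N - q" using card_poly_roots_bound[OF \<open>g \<noteq> 0\<close>] dg by simp
  finally have "N \<le> card {a::'a. poly (X ^ q - X) a = 0} + (N - q)" using assms N_def by simp
  moreover have "{a::'a. poly (X ^ q - X) a = 0} = {a. a ^ q = a}" unfolding pX by auto
  ultimately show ?thesis using Nq by simp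
qed

lemma tr1_card:
  assumes "q \<ge> 2" "h \<ge> 2"
  shows "card {z::'a::field. trace_rel q h z = 1} \<le> q ^ (h - 1)"
proof -
  define T :: "'a poly" where "T = (\<Sum>i<h. monom 1 (q ^ i)) - monom 1 0"
  have pT: "poly T z = trace_rel q h z - 1" for z
    unfolding T_def trace_rel_def by (simp add: poly_sum poly_monom)
  have inj: "q ^ i = q ^ (h - 1) \<longleftrightarrow> i = h - 1" for i
    using assms by (simp add: power_inject_exp)
  have pos: "q ^ (h - 1) \<noteq> 0" using assms by simp
  have "coeff T (q ^ (h - 1)) = (\<Sum>i<h. if q ^ i = q ^ (h - 1) then 1 else 0) - (if 0 = q ^ (h - 1) then 1 else 0)"
    unfolding T_def by (simp only: coeff_diff coeff_sum coeff_monom)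
  also have "\<dots> = (\<Sum>i<h. if i = h - 1 then 1 else 0)"
    using pos by (simp only: inj) simp
  also have "\<dots> = 1" using assms by simp
  finally have c: "coeff T (q ^ (h - 1)) = 1" .
  then have "T \<noteq> 0" by auto
  have "degree T \<le> q ^ (h - 1)"
    unfolding T_def
  proof (intro degree_diff_le degree_sum_le)
    fix i assume "i \<in> {..<h}"
    then have "q ^ i \<le> q ^ (h - 1)" using assms by (intro power_increasing) auto
    then show "degree (monom (1::'a) (q ^ i)) \<le> q ^ (h - 1)" by (simp add: degree_monom_eq)
  qed auto
  then have "card {z. poly T z = 0} \<le> q ^ (h - 1)"
    using card_poly_roots_bound[OF \<open>T \<noteq> 0\<close>] by simp
  moreover have "{z. poly T z = 0} = {z. trace_rel q h z = 1}" unfolding pT by auto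
  ultimately show ?thesis by simp
qed


lemma mk3_nth [simp]: "mk3 a b c $ 1 = a" "mk3 a b c $ 2 = b" "mk3 a b c $ 3 = c"
  unfolding mk3_def by simp_all

lemma vec3_eqI:
  fixes v w :: "'a^3"
  assumes "v $ 1 = w $ 1" "v $ 2 = w $ 2" "v $ 3 = w $ 3"
  shows "v = w"
  unfolding vec_eq_iff
proof
  fix i :: 3
  show "v $ i = w $ i" using exhaust_3[of i] assms by auto
qed

lemma vec3_zero_iff: "(v::'a::zero^3) = 0 \<longleftrightarrow> v $ 1 = 0 \<and> v $ 2 = 0 \<and> v $ 3 = 0"
proof
  assume "v $ 1 = 0 \<and> v $ 2 = 0 \<and> v $ 3 = 0"
  then show "v = 0" unfolding vec_eq_iff
    by (metis exhaust_3 zero_index)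
qed simp

lemma dot3_expand: "dot3 l v = l $ 1 * v $ 1 + l $ 2 * v $ 2 + l $ 3 * v $ 3"
  unfolding dot3_def by (simp add: sum_3)

lemma dot3_scale: "dot3 l (c *s v) = c * dot3 l v"
  unfolding dot3_expand by (simp add: algebra_simps)

lemma dot3_add: "dot3 l (v + w) = dot3 l v + dot3 l w"
  unfolding dot3_expand by (simp add: algebra_simps)

lemma dot3_lcomb: "dot3 (l + c *s m) v = dot3 l v + c * dot3 m v"
  unfolding dot3_expand by (simp add: algebra_simps)

lemma proj_pt_self: "v \<in> proj_pt v"
  unfolding proj_pt_def by (rule CollectI, rule exI[of _ 1]) simp

lemma proj_pt_scale:
  assumes "c \<noteq> 0"
  shows "proj_pt (c *s v) = proj_pt v"
  unfolding proj_pt_def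
proof (intro equalityI subsetI)
  fix x assume "x \<in> {d *s (c *s v) |d. d \<noteq> 0}"
  then obtain d where "d \<noteq> 0" "x = d *s (c *s v)" by blast
  then show "x \<in> {d *s v |d. d \<noteq> 0}" using assms
    by (intro CollectI exI[of _ "d * c"]) (simp add: vector_smult_assoc)
next
  fix x assume "x \<in> {d *s v |d. d \<noteq> 0}"
  then obtain d where "d \<noteq> 0" "x = d *s v" by blast
  then show "x \<in> {d *s (c *s v) |d. d \<noteq> 0}" using assms
    by (intro CollectI exI[of _ "d / c"]) (simp add: vector_smult_assoc)
qed

lemma proj_pt_eqD:
  assumes "proj_pt v = proj_pt w"
  shows "\<exists>c. c \<noteq> 0 \<and> v = c *s w"
proof -
  have "v \<in> proj_pt w" using assms proj_pt_self by metis
  then show ?thesis unfolding proj_pt_def by blast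
qed

lemma in_proj_line_dot:
  assumes "Q \<in> proj_line l" "v \<in> Q"
  shows "dot3 l v = 0"
proof -
  obtain w where w: "w \<noteq> 0" "Q = proj_pt w" using assms(1) unfolding proj_line_def PG2_def by blast
  obtain u where u: "u \<in> Q" "dot3 l u = 0" using assms(1) unfolding proj_line_def by blast
  obtain c where c: "c \<noteq> 0" "u = c *s w" using u(1) w(2) unfolding proj_pt_def by blast
  obtain d where d: "v = d *s w" using assms(2) w(2) unfolding proj_pt_def by blast
  have "dot3 l w = 0" using u c by (simp add: dot3_scale)
  then show ?thesis using d by (simp add: dot3_scale)
qed

lemma proj_pt_in_line:
  assumes "w \<noteq> 0" "dot3 l w = 0"
  shows "proj_pt w \<in> proj_line l"
  unfolding proj_line_def PG2_def using assms proj_pt_self by blast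

lemma PG2_finite: "finite (PG2 :: ('a::{field,finite}^3) set set)"
  by (rule finite)

lemma lines_through_aux:
  fixes p l1 l2 :: "'a::field^3"
  assumes "\<And>s. l1 + s *s l2 \<noteq> 0" "l2 \<noteq> 0" "dot3 l1 p = 0" "dot3 l2 p = 0"
    "\<And>v. dot3 l1 v = 0 \<Longrightarrow> dot3 l2 v = 0 \<Longrightarrow> \<exists>c. v = c *s p"
  shows "\<exists>l1 l2. (\<forall>s. l1 + s *s l2 \<noteq> 0) \<and> l2 \<noteq> 0 \<and> dot3 l1 p = 0 \<and> dot3 l2 p = 0 \<and>
     (\<forall>v. dot3 l1 v = 0 \<and> dot3 l2 v = 0 \<longrightarrow> (\<exists>c. v = c *s p))"
  using assms by blast

lemma lines_through:
  fixes p :: "'a::field^3"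
  assumes "p \<noteq> 0"
  shows "\<exists>l1 l2. (\<forall>s. l1 + s *s l2 \<noteq> 0) \<and> l2 \<noteq> 0 \<and> dot3 l1 p = 0 \<and> dot3 l2 p = 0 \<and>
     (\<forall>v. dot3 l1 v = 0 \<and> dot3 l2 v = 0 \<longrightarrow> (\<exists>c. v = c *s p))"
proof (cases "p $ 3 = 0")
  case False
  show ?thesis
  proof (rule lines_through_aux[of "mk3 (p$3) 0 (- p$1)" "mk3 0 (p$3) (- p$2)"])
    fix s :: 'a
    show "mk3 (p$3) 0 (- p$1) + s *s mk3 0 (p$3) (- p$2) \<noteq> 0"
      using False by (simp add: vec3_zero_iff)
  next
    fix v :: "'a^3"
    assume a: "dot3 (mk3 (p$3) 0 (- p$1)) v = 0" "dot3 (mk3 0 (p$3) (- p$2)) v = 0"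
    show "\<exists>c. v = c *s p"
      by (rule exI[of _ "v$3 / p$3"], rule vec3_eqI) (use a False in \<open>simp_all add: dot3_expand field_simps\<close>)
  qed (use False in \<open>simp_all add: dot3_expand algebra_simps vec3_zero_iff\<close>)
next
  case p3: True
  show ?thesis
  proof (cases "p $ 2 = 0")
    case False
    show ?thesis
    proof (rule lines_through_aux[of "mk3 (p$2) (- p$1) 0" "mk3 0 0 1"])
      fix s :: 'a
      show "mk3 (p$2) (- p$1) 0 + s *s mk3 0 0 1 \<noteq> 0"
        using False by (simp add: vec3_zero_iff)
    next
      fix v :: "'a^3"
      assume a: "dot3 (mk3 (p$2) (- p$1) 0) v = 0" "dot3 (mk3 0 0 1) v = 0"
      show "\<exists>c. v = c *s p"
        by (rule exI[of _ "v$2 / p$2"], rule vec3_eqI) (use a False p3 in \<open>simp_all add: dot3_expand field_simps\<close>)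
    qed (use p3 in \<open>simp_all add: dot3_expand algebra_simps vec3_zero_iff\<close>)
  next
    case p2: True
    have p1: "p $ 1 \<noteq> 0" using assms p2 p3 by (simp add: vec3_zero_iff)
    show ?thesis
    proof (rule lines_through_aux[of "mk3 0 1 0" "mk3 0 0 1"])
      fix s :: 'a
      show "mk3 0 1 0 + s *s mk3 0 0 1 \<noteq> 0"
        by (simp add: vec3_zero_iff)
    next
      fix v :: "'a^3"
      assume a: "dot3 (mk3 0 1 0) v = 0" "dot3 (mk3 0 0 1) v = 0"
      show "\<exists>c. v = c *s p"
        by (rule exI[of _ "v$1 / p$1"], rule vec3_eqI) (use a p1 p2 p3 in \<open>simp_all add: dot3_expand field_simps\<close>)
    qed (use p2 p3 in \<open>simp_all add: dot3_expand algebra_simps vec3_zero_iff\<close>)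
  qed
qed


lemma image_proj_pt: "(\<lambda>v. M *v v) ` proj_pt u = proj_pt (M *v (u::'a::field^3))"
  unfolding proj_pt_def
  apply (auto simp: vector_scalar_commute)
  subgoal for c by (rule image_eqI[of _ _ "c *s u"]) (auto simp: vector_scalar_commute)
  done

lemma mk3_zero_iff: "mk3 a b c = (0::'a::zero^3) \<longleftrightarrow> a = 0 \<and> b = 0 \<and> c = 0"
  by (simp add: vec3_zero_iff)

lemma prop_same_pt:
  assumes "w1 = k *s w2" "w1 \<noteq> 0"
  shows "proj_pt w1 = proj_pt (w2::'a::field^3)"
proof -
  have "k \<noteq> 0" using assms by auto
  then show ?thesis using assms proj_pt_scale by metis
qed

lemma scal_aux:
  fixes x y a b c :: "'a::field"
  assumes "x + a * y = c * (x + b * y)" "c \<noteq> 1"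
  shows "x = ((c * b - a) / (1 - c)) * y"
proof -
  have "1 - c \<noteq> 0" using assms by simp
  have "(1 - c) * x = (c * b - a) * y" using assms(1) by (simp add: algebra_simps)
  then show ?thesis using \<open>1 - c \<noteq> 0\<close> by (simp add: field_simps)
qed

lemma line_many:
  fixes W :: "('a::{field,finite}^3) set"
  assumes Ldef: "L = {proj_pt w | w. w \<in> W \<and> w \<noteq> 0}"
    and clos: "\<And>w1 w2 a. w1 \<in> W \<Longrightarrow> w2 \<in> W \<Longrightarrow> a ^ q = a \<Longrightarrow> w1 + a *s w2 \<in> W"
    and Q1: "Q1 \<in> proj_line l \<inter> L" and Q2: "Q2 \<in> proj_line l \<inter> L" and ne: "Q1 \<noteq> Q2"
    and Fq: "card {a::'a. a ^ q = a} \<ge> q"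
  shows "card (proj_line l \<inter> L) \<ge> q + 1"
proof -
  obtain w1 where w1: "w1 \<in> W" "w1 \<noteq> 0" "Q1 = proj_pt w1" using Q1 Ldef by blast
  obtain w2 where w2: "w2 \<in> W" "w2 \<noteq> 0" "Q2 = proj_pt w2" using Q2 Ldef by blast
  have d1: "dot3 l w1 = 0" using Q1 w1 proj_pt_self in_proj_line_dot by blast
  have d2: "dot3 l w2 = 0" using Q2 w2 proj_pt_self in_proj_line_dot by blast
  define F where "F = {a::'a. a ^ q = a}"
  define f where "f a = proj_pt (w1 + a *s w2)" for a
  have nz: "w1 + a *s w2 \<noteq> 0" for a
  proof
    assume "w1 + a *s w2 = 0"
    then have "w1 = (- a) *s w2" by (simp add: vec_eq_iff) (metis add.commute add_eq_0_iff2)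
    then show False using prop_same_pt w1 w2 ne by metis
  qed
  have fin: "f a \<in> proj_line l \<inter> L" if "a \<in> F" for a
  proof
    show "f a \<in> proj_line l" unfolding f_def
      by (rule proj_pt_in_line[OF nz]) (simp add: dot3_add dot3_scale d1 d2)
    show "f a \<in> L" unfolding f_def Ldef using clos[OF w1(1) w2(1)] that nz F_def by blast
  qed
  have inj: "inj_on f F"
  proof
    fix a b assume "a \<in> F" "b \<in> F" "f a = f b"
    then obtain c where c: "c \<noteq> 0" "w1 + a *s w2 = c *s (w1 + b *s w2)"
      unfolding f_def using proj_pt_eqD by blast
    have comp: "w1 $ i + a * w2 $ i = c * (w1 $ i + b * w2 $ i)" for i
      using arg_cong[OF c(2), of "\<lambda>v. v $ i"] by (simp add: algebra_simps)
    show "a = b"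
    proof (cases "c = 1")
      case True
      obtain i where "w2 $ i \<noteq> 0" using w2(2) by (metis vec_eq_iff zero_index)
      then show ?thesis using comp[of i] True by simp
    next
      case False
      have "w1 = ((c * b - a) / (1 - c)) *s w2"
        using scal_aux[OF comp False] by (simp add: vec_eq_iff)
      then show ?thesis using prop_same_pt w1 w2 ne by metis
    qed
  qed
  have notQ2: "f a \<noteq> Q2" for a
  proof
    assume "f a = Q2"
    then obtain c where c: "w1 + a *s w2 = c *s w2" unfolding f_def w2 using proj_pt_eqD by blast
    then have "w1 = (c - a) *s w2" by (simp add: vec_eq_iff algebra_simps)
    then show False using prop_same_pt w1 w2 ne by metis
  qed
  have "card (insert Q2 (f ` F)) = card F + 1"
  proof -
    have "Q2 \<notin> f ` F" using notQ2 by auto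
    then show ?thesis using inj by (simp add: card_insert_disjoint card_image)
  qed
  moreover have "insert Q2 (f ` F) \<subseteq> proj_line l \<inter> L" using fin Q2 by blast
  ultimately have "card F + 1 \<le> card (proj_line l \<inter> L)"
    by (metis card_mono finite)
  then show ?thesis using Fq F_def by simp
qed


lemma L_repr:
  fixes M :: "'a::field^3^3"
  assumes "invertible M" "q > 0"
  shows "proj_image M (trace_set q h) =
    {proj_pt w | w. w \<in> (\<lambda>u. M *v u) ` {mk3 x (trace_rel q h x) y | x y. y ^ q = y} \<and> w \<noteq> 0}"
proof -
  have injM: "inj ((*v) M)" by (rule inj_matrix_vector_mult[OF assms(1)])
  have M0: "M *v u = 0 \<longleftrightarrow> u = 0" for u
    using injM by (metis injD matrix_vector_mult_0_right)
  have mk0: "mk3 x (trace_rel q h x) y = 0 \<longleftrightarrow> (x, y) = (0, 0)" for x y :: 'a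
    using trace_zero[OF assms(2), where 'a='a, of h] by (auto simp: mk3_zero_iff)
  show ?thesis
  proof (intro equalityI subsetI)
    fix Q assume "Q \<in> proj_image M (trace_set q h)"
    then obtain x y where xy: "y ^ q = y" "(x, y) \<noteq> (0, 0)"
      "Q = (\<lambda>v. M *v v) ` proj_pt (mk3 x (trace_rel q h x) y)"
      unfolding proj_image_def trace_set_def by blast
    then have "Q = proj_pt (M *v mk3 x (trace_rel q h x) y)" by (simp add: image_proj_pt)
    moreover have "M *v mk3 x (trace_rel q h x) y \<noteq> 0" using M0 mk0 xy(2) by simp
    ultimately show "Q \<in> {proj_pt w | w. w \<in> (\<lambda>u. M *v u) ` {mk3 x (trace_rel q h x) y | x y. y ^ q = y} \<and> w \<noteq> 0}"
      using xy(1) by blast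
  next
    fix Q assume "Q \<in> {proj_pt w | w. w \<in> (\<lambda>u. M *v u) ` {mk3 x (trace_rel q h x) y | x y. y ^ q = y} \<and> w \<noteq> 0}"
    then obtain x y where xy: "y ^ q = y" "M *v mk3 x (trace_rel q h x) y \<noteq> 0"
      "Q = proj_pt (M *v mk3 x (trace_rel q h x) y)" by blast
    have "(x, y) \<noteq> (0, 0)" using xy(2) M0 mk0 by auto
    moreover have "Q = (\<lambda>v. M *v v) ` proj_pt (mk3 x (trace_rel q h x) y)"
      using xy(3) by (simp add: image_proj_pt)
    ultimately show "Q \<in> proj_image M (trace_set q h)"
      unfolding proj_image_def trace_set_def using xy(1) by blast
  qed
qed

lemma W_clos:
  fixes M :: "'a::field^3^3"
  assumes frob: "\<forall>x y::'a. (x + y) ^ q = x ^ q + y ^ q"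
    and "w1 \<in> (\<lambda>u. M *v u) ` {mk3 x (trace_rel q h x) y | x y. y ^ q = y}"
    and "w2 \<in> (\<lambda>u. M *v u) ` {mk3 x (trace_rel q h x) y | x y. y ^ q = y}"
    and a: "a ^ q = a"
  shows "w1 + a *s w2 \<in> (\<lambda>u. M *v u) ` {mk3 x (trace_rel q h x) y | x y. y ^ q = y}"
proof -
  obtain x1 y1 where 1: "y1 ^ q = y1" "w1 = M *v mk3 x1 (trace_rel q h x1) y1" using assms(2) by blast
  obtain x2 y2 where 2: "y2 ^ q = y2" "w2 = M *v mk3 x2 (trace_rel q h x2) y2" using assms(3) by blast
  have e: "mk3 x1 (trace_rel q h x1) y1 + a *s mk3 x2 (trace_rel q h x2) y2 =
      mk3 (x1 + a * x2) (trace_rel q h (x1 + a * x2)) (y1 + a * y2)"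
    by (rule vec3_eqI) (simp_all add: trace_add[OF frob] trace_scal[OF a])
  have y: "(y1 + a * y2) ^ q = y1 + a * y2" using frob 1 2 a by (simp add: power_mult_distrib)
  have "w1 + a *s w2 = M *v (mk3 (x1 + a * x2) (trace_rel q h (x1 + a * x2)) (y1 + a * y2))"
    unfolding 1 2 e[symmetric] by (simp add: matrix_vector_right_distrib vector_scalar_commute)
  then show ?thesis using y by blast
qed

lemma trace_set_card:
  fixes q h :: nat
  assumes frob: "\<forall>x y::'a::{field,finite}. (x + y) ^ q = x ^ q + y ^ q"
    and q: "q \<ge> 2" and h: "h \<ge> 2" and card: "CARD('a) = q ^ h"
  shows "card (trace_set q h :: ('a^3) set set) \<le> q ^ h + q ^ (h - 1) + 1"
proof -
  define A where "A = (\<lambda>z. proj_pt (mk3 z (trace_rel q h z) (1::'a))) ` UNIV"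
  define B where "B = (\<lambda>z. proj_pt (mk3 z (1::'a) 0)) ` {z. trace_rel q h z = 1}"
  have sub: "trace_set q h \<subseteq> A \<union> B \<union> {proj_pt (mk3 1 0 0)}"
  proof
    fix Q assume "Q \<in> (trace_set q h :: ('a^3) set set)"
    then obtain x y :: 'a where xy: "Q = proj_pt (mk3 x (trace_rel q h x) y)" "y ^ q = y" "(x, y) \<noteq> (0, 0)"
      unfolding trace_set_def by blast
    show "Q \<in> A \<union> B \<union> {proj_pt (mk3 1 0 0)}"
    proof (cases "y = 0")
      case False
      have iy: "(1 / y) ^ q = 1 / y" using xy(2) by (simp add: power_divide)
      have "Q = proj_pt ((1 / y) *s mk3 x (trace_rel q h x) y)"
        using xy(1) False by (simp add: proj_pt_scale)
      also have "(1 / y) *s mk3 x (trace_rel q h x) y = mk3 (x / y) (trace_rel q h (x / y)) 1"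
        using trace_scal[OF iy, of h x] False by (intro vec3_eqI) simp_all
      finally show ?thesis unfolding A_def by blast
    next
      case y0: True
      then have x0: "x \<noteq> 0" using xy by simp
      show ?thesis
      proof (cases "trace_rel q h x = 0")
        case True
        have "mk3 x 0 0 = x *s mk3 1 0 (0::'a)" by (rule vec3_eqI) simp_all
        then have "Q = proj_pt (x *s mk3 1 0 0)"
          using xy(1) y0 True by simp
        then show ?thesis using proj_pt_scale[OF x0] by simp
      next
        case False
        define t where "t = trace_rel q h x"
        have "x ^ (q ^ h) = x" using ff_pow_card[of x] card by simp
        then have "t ^ q = t" unfolding t_def using trace_fq[OF frob] q by simp
        then have it: "(1 / t) ^ q = 1 / t" by (simp add: power_divide)
        have t0: "t \<noteq> 0" using False t_def by simp
        have "Q = proj_pt ((1 / t) *s mk3 x (trace_rel q h x) y)"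
          using xy(1) t0 by (simp add: proj_pt_scale)
        also have "(1 / t) *s mk3 x (trace_rel q h x) y = mk3 (x / t) 1 0"
          using t0 y0 t_def by (intro vec3_eqI) simp_all
        finally have "Q = proj_pt (mk3 (x / t) 1 0)" .
        moreover have "trace_rel q h (x / t) = 1"
          using trace_scal[OF it, of h x] t0 t_def by simp
        ultimately show ?thesis unfolding B_def by blast
      qed
    qed
  qed
  have "card (trace_set q h :: ('a^3) set set) \<le> card (A \<union> B \<union> {proj_pt (mk3 1 0 0)})"
    by (rule card_mono[OF finite sub])
  also have "\<dots> \<le> card A + card B + 1"
  proof -
    have "card (A \<union> B \<union> {proj_pt (mk3 1 0 0)}) \<le> card (A \<union> B) + card {proj_pt (mk3 (1::'a) 0 0)}"
      by (rule card_Un_le)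
    moreover have "card (A \<union> B) \<le> card A + card B" by (rule card_Un_le)
    ultimately show ?thesis by simp
  qed
  also have "card A \<le> q ^ h"
  proof -
    have "card A \<le> card (UNIV :: 'a set)" unfolding A_def by (rule card_image_le) simp
    then show ?thesis using card by simp
  qed
  also have "card B \<le> q ^ (h - 1)"
  proof -
    have "card B \<le> card {z::'a. trace_rel q h z = 1}" unfolding B_def by (rule card_image_le) simp
    then show ?thesis using tr1_card[OF q h, where 'a='a] by simp
  qed
  finally show ?thesis by simp
qed


theorem lemma2p10:
  fixes q h :: nat
    and L :: "('a::{field,finite}^3) set set"
    and P :: "('a^3) set"
  assumes "prime_power q"
    and "h \<ge> 2"
    and "CARD('a) = q ^ h"
    and "blocking_set L"
    and "proj_equiv (trace_set q h) L"
    and "P \<in> PG2"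
    and "P \<notin> L"
  shows "card {lne. tangent_line L lne \<and> P \<in> lne} \<ge> q ^ h - q ^ (h - 2) + 1"
proof -
  note pp = assms(1) and h2 = assms(2) and cardA = assms(3) and blk = assms(4)
    and eqv = assms(5) and PPG = assms(6) and PL = assms(7)
  obtain pr k where pk: "prime pr" "k > 0" "q = pr ^ k"
    using pp unfolding prime_power_def by blast
  have q2: "q \<ge> 2"
  proof -
    have "pr \<ge> 2" using pk(1) by (simp add: prime_ge_2_nat)
    moreover have "pr \<le> pr ^ k" using pk(2) \<open>pr \<ge> 2\<close> by (simp add: self_le_power)
    ultimately show ?thesis using pk(3) by simp
  qed
  have frob: "\<forall>x y::'a. (x + y) ^ q = x ^ q + y ^ q"
    using ff_frob[OF pp cardA] h2 by simp
  obtain M where M: "invertible M" "L = proj_image M (trace_set q h)"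
    using eqv unfolding proj_equiv_def by blast
  define W where "W = (\<lambda>u. M *v u) ` {mk3 x (trace_rel q h x) y | x y. y ^ q = y}"
  have Ldef: "L = {proj_pt w | w. w \<in> W \<and> w \<noteq> 0}"
    unfolding W_def M(2) using L_repr[OF M(1)] q2 by simp
  have clos: "\<And>w1 w2 a. w1 \<in> W \<Longrightarrow> w2 \<in> W \<Longrightarrow> a ^ q = a \<Longrightarrow> w1 + a *s w2 \<in> W"
    unfolding W_def by (rule W_clos[OF frob])
  have Fq: "card {a::'a. a ^ q = a} \<ge> q" using fq_card[OF q2 _ cardA] h2 by simp
  have cardL: "card L \<le> q ^ h + q ^ (h - 1) + 1"
  proof -
    have "card L \<le> card (trace_set q h :: ('a^3) set set)"
      unfolding M(2) proj_image_def by (rule card_image_le) simp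
    then show ?thesis using trace_set_card[OF frob q2 h2 cardA] by simp
  qed
  obtain p0 where p0: "p0 \<noteq> 0" "P = proj_pt p0" using PPG unfolding PG2_def by blast
  obtain l1 l2 where ll: "\<forall>s. l1 + s *s l2 \<noteq> 0" "l2 \<noteq> 0" "dot3 l1 p0 = 0" "dot3 l2 p0 = 0"
     "\<forall>v. dot3 l1 v = 0 \<and> dot3 l2 v = 0 \<longrightarrow> (\<exists>c. v = c *s p0)"
    using lines_through[OF p0(1)] by blast
  define ln where "ln r = (case r of None \<Rightarrow> l2 | Some s \<Rightarrow> l1 + s *s l2)" for r :: "'a option"
  have ln_nz: "ln r \<noteq> 0" for r using ll by (cases r) (auto simp: ln_def)
  have ln_p: "dot3 (ln r) p0 = 0" for r using ll by (cases r) (auto simp: ln_def dot3_lcomb)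
  have ln_meet: "\<exists>c. v = c *s p0" if H: "r \<noteq> r2" "dot3 (ln r) v = 0" "dot3 (ln r2) v = 0" for r r2 v
  proof -
    have "dot3 l1 v = 0 \<and> dot3 l2 v = 0"
    proof (cases r)
      case None
      then obtain s where "r2 = Some s" using H by (cases r2) auto
      then show ?thesis using that None by (simp add: ln_def dot3_lcomb)
    next
      case (Some s)
      show ?thesis
      proof (cases r2)
        case None
        then show ?thesis using that Some by (simp add: ln_def dot3_lcomb)
      next
        case (Some s')
        then have ss: "s \<noteq> s'" using that \<open>r = Some s\<close> by auto
        have e1: "dot3 l1 v + s * dot3 l2 v = 0" using that \<open>r = Some s\<close> by (simp add: ln_def dot3_lcomb)
        have e2: "dot3 l1 v + s' * dot3 l2 v = 0" using that Some by (simp add: ln_def dot3_lcomb)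
        have "(s - s') * dot3 l2 v = (dot3 l1 v + s * dot3 l2 v) - (dot3 l1 v + s' * dot3 l2 v)"
          by (simp add: algebra_simps)
        then have "(s - s') * dot3 l2 v = 0" using e1 e2 by simp
        then have "dot3 l2 v = 0" using ss by simp
        then show ?thesis using e1 by simp
      qed
    qed
    then show ?thesis using ll(5) by blast
  qed
  define A where "A r = proj_line (ln r) \<inter> L" for r
  have line_in: "proj_line (ln r) \<in> lines2" for r unfolding lines2_def using ln_nz by blast
  have Ane: "A r \<noteq> {}" for r
  proof -
    have "proj_line (ln r) \<inter> L \<noteq> {}" using blk line_in[of r] unfolding blocking_set_def by blast
    then show ?thesis unfolding A_def .
  qed
  have Adisj: "A r \<inter> A r2 = {}" if H: "r \<noteq> r2" for r r2
  proof (rule ccontr)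
    assume "A r \<inter> A r2 \<noteq> {}"
    then obtain Q where Q: "Q \<in> proj_line (ln r)" "Q \<in> proj_line (ln r2)" "Q \<in> L"
      unfolding A_def by blast
    from Q(3) obtain w where w: "w \<noteq> 0" "Q = proj_pt w" unfolding Ldef by blast
    have "w \<in> Q" unfolding w(2) by (rule proj_pt_self)
    then have "dot3 (ln r) w = 0" "dot3 (ln r2) w = 0"
      using in_proj_line_dot[OF Q(1)] in_proj_line_dot[OF Q(2)] by auto
    then obtain c where c: "w = c *s p0" using ln_meet[OF H] by blast
    have "proj_pt w = proj_pt p0" by (rule prop_same_pt[OF c w(1)])
    then have "Q = P" using w(2) p0(2) by simp
    then show False using Q(3) PL by simp
  qed
  have Abig: "card (A r) \<ge> q + 1" if "card (A r) \<noteq> 1" for r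
  proof -
    obtain Q1 where Q1: "Q1 \<in> A r" using Ane by blast
    have "A r \<noteq> {Q1}" using that by auto
    then obtain Q2 where Q2: "Q2 \<in> A r" "Q2 \<noteq> Q1" using Q1 by blast
    have a1: "Q1 \<in> proj_line (ln r) \<inter> L" using Q1 unfolding A_def .
    have a2: "Q2 \<in> proj_line (ln r) \<inter> L" using Q2(1) unfolding A_def .
    have ne: "Q1 \<noteq> Q2" using Q2(2) by simp
    show ?thesis unfolding A_def by (rule line_many[OF Ldef clos a1 a2 ne Fq])
  qed
  define T where "T = {r. card (A r) = 1}"
  have sum_le: "(\<Sum>r\<in>UNIV. card (A r)) \<le> card L"
  proof -
    have "(\<Sum>r\<in>UNIV. card (A r)) = card (\<Union>(A ` UNIV))"
      by (rule card_UN_disjoint[symmetric]) (simp_all add: Adisj)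
    also have "\<dots> \<le> card L" by (rule card_mono[OF finite]) (auto simp: A_def)
    finally show ?thesis .
  qed
  have cU: "card (UNIV :: 'a option set) = q ^ h + 1" using cardA by simp
  have sum_ge: "card T + (q + 1) * (q ^ h + 1 - card T) \<le> (\<Sum>r\<in>UNIV. card (A r))"
  proof -
    have "(\<Sum>r\<in>UNIV. card (A r)) = (\<Sum>r\<in>UNIV - T. card (A r)) + (\<Sum>r\<in>T. card (A r))"
      by (rule sum.subset_diff) simp_all
    moreover have "(\<Sum>r\<in>T. card (A r)) = card T" unfolding T_def by simp
    moreover have "of_nat (card (UNIV - T)) * (q + 1) \<le> (\<Sum>r\<in>UNIV - T. card (A r))"
      by (rule sum_bounded_below) (use Abig T_def in auto)
    moreover have "card (UNIV - T) = q ^ h + 1 - card T"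
      using cU by (simp add: card_Diff_subset)
    ultimately show ?thesis by (simp add: mult.commute)
  qed
  have tang: "tangent_line L (proj_line (ln r)) \<and> P \<in> proj_line (ln r)" if "r \<in> T" for r
  proof
    show "tangent_line L (proj_line (ln r))"
    proof -
      have "card (A r) = 1" using that T_def by simp
      then show ?thesis unfolding tangent_line_def A_def using line_in by simp
    qed
    show "P \<in> proj_line (ln r)" unfolding p0(2) by (rule proj_pt_in_line[OF p0(1) ln_p])
  qed
  have inj: "inj_on (\<lambda>r. proj_line (ln r)) T"
  proof
    fix r r2 assume a: "r \<in> T" "r2 \<in> T" "proj_line (ln r) = proj_line (ln r2)"
    show "r = r2"
    proof (rule ccontr)
      assume "r \<noteq> r2"
      then have "A r \<inter> A r2 = {}" by (rule Adisj)
      moreover have "A r = A r2" using a(3) A_def by simp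
      ultimately show False using Ane by auto
    qed
  qed
  have "card T = card ((\<lambda>r. proj_line (ln r)) ` T)" using inj by (simp add: card_image)
  also have "\<dots> \<le> card {lne. tangent_line L lne \<and> P \<in> lne}"
  proof (rule card_mono[OF finite])
    show "(\<lambda>r. proj_line (ln r)) ` T \<subseteq> {lne. tangent_line L lne \<and> P \<in> lne}"
      using tang by blast
  qed
  finally have tle: "card T \<le> card {lne. tangent_line L lne \<and> P \<in> lne}" .
  define t where "t = card T"
  define m where "m = q ^ (h - 2)"
  have tN: "t \<le> q ^ h + 1"
  proof -
    have "t \<le> card (UNIV :: 'a option set)" unfolding t_def by (rule card_mono) simp_all
    then show ?thesis using cU by simp
  qed
  have hh: "h = Suc (Suc (h - 2))" using h2 by simp
  have e1: "q ^ (h - 1) = q * m"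
  proof -
    have "h - 1 = Suc (h - 2)" using h2 by simp
    then show ?thesis unfolding m_def by simp
  qed
  have e2: "q ^ h = q * (q * m)" unfolding m_def by (subst hh) simp
  define d where "d = q ^ h + 1 - t"
  have td: "t + d = q ^ h + 1" using tN d_def by simp
  have "card T + (q + 1) * (q ^ h + 1 - card T) \<le> q ^ h + q ^ (h - 1) + 1"
    using sum_ge sum_le cardL by linarith
  then have i1: "t + (q + 1) * d \<le> q ^ h + q * m + 1" unfolding t_def d_def e1 .
  have "(q + 1) * d = q * d + d" by simp
  then have "q * d \<le> q * m" using i1 td by linarith
  then have "d \<le> m" using q2 by simp
  moreover have "m \<le> q ^ h" unfolding m_def using q2 by (intro power_increasing) auto
  ultimately have "q ^ h - m + 1 \<le> t" using td by linarith
  then show ?thesis using tle t_def m_def by simp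
qed

end
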